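(* Let $N\ge1$, $r_1,\dots,r_N$ real, $(\mu_{ij})$ an $N\times N$ real matrix and $\Psi_1,\dots,\Psi_N:\mathbb{R}^N\to\mathbb{R}$ such that: $r_i>0$; $(\mu_{ij})$ is nonnegative, symmetric and irreducible; each $\Psi_i$ is locally Lipschitz, $\Psi_i(0)=0$, monotone increasing for the componentwise order; for each $i$ there exist positive $R_i,k_i,c_i$ with $c_i(\sum_jv_j)^{k_i}\le\Psi_i(v)$ for all $v\in[0,\infty)^N$ with $\sum_j|v_j|\ge R_i$; and $\sum_{j=1}^N\mu_{ij}\le r_i/2$ for all $i$. Let $R=\mathrm{diag}(r_1,\dots,r_N)$ and let $M$ be the matrix with $M_{ij}=\mu_{ij}$ for $i\ne j$ and $M_{ii}=\mu_{ii}-\sum_{j=1}^N\mu_{ij}$. For $s\in[0,1]$ let $\Psi_i^s=s\Psi_i+(1-s)\Psi_1$ and $\Xi^s(V)=\mathrm{diag}(\Psi^s_1(V),\dots,\Psi^s_N(V))$. Let $V\in[0,\infty)^N$ be a nonnegative solution of $$(R+M)V=\Xi^s(V)V.$$ Then either $V\equiv0$ or $V_i>0$ for all $i$; and there exist constants $\bar c_1,\bar C_1>0$ independent of $s$ (and of $V$) such that, in the latter case, $\bar c_1\le\sum_iV_i\le\bar C_1$. *)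

theory Defs
  imports "HOL-Analysis.Analysis"
begin

text \<open>Irreducible square matrix: there is no proper nonempty set of indices I
  such that all entries A i j with i in I and j outside I vanish
  (equivalently, A is not permutation-similar to a block triangular matrix).\<close>
definition irreducible_mat :: "real^'n^'n \<Rightarrow> bool" where
  "irreducible_mat A \<longleftrightarrow>
     (\<forall>I. I \<noteq> {} \<and> I \<noteq> UNIV \<longrightarrow> (\<exists>i\<in>I. \<exists>j. j \<notin> I \<and> A$i$j \<noteq> 0))"

definition locally_lipschitz :: "(real^'n \<Rightarrow> real) \<Rightarrow> bool" where
  "locally_lipschitz f \<longleftrightarrow> (\<forall>x. \<exists>e>0. \<exists>L. L-lipschitz_on (ball x e) f)"

definition diag_mat :: "real^'n \<Rightarrow> real^'n^'n" where
  "diag_mat d = (\<chi> i j. if i = j then d$i else 0)"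

definition M_mat :: "real^'n^'n \<Rightarrow> real^'n^'n" where
  "M_mat mu = (\<chi> i j. if i = j then mu$i$i - (\<Sum>k\<in>UNIV. mu$i$k) else mu$i$j)"

text \<open>Psi^s_i = s Psi_i + (1-s) Psi_1, where i1 is the distinguished index "1".\<close>
definition Psi_s :: "('n \<Rightarrow> real^'n \<Rightarrow> real) \<Rightarrow> 'n \<Rightarrow> real \<Rightarrow> 'n \<Rightarrow> real^'n \<Rightarrow> real" where
  "Psi_s Psi i1 s i v = s * Psi i v + (1 - s) * Psi i1 v"

definition Xi_s :: "('n \<Rightarrow> real^'n \<Rightarrow> real) \<Rightarrow> 'n \<Rightarrow> real \<Rightarrow> real^'n \<Rightarrow> real^'n^'n" where
  "Xi_s Psi i1 s V = diag_mat (\<chi> i. Psi_s Psi i1 s i V)"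

end

theory Submission
  imports Defs
begin

lemma lhs_comp:
  fixes r :: "real^'n" and mu :: "real^'n^'n"
  shows "((diag_mat r + M_mat mu) *v V)$i
     = r$i * V$i + (\<Sum>j\<in>UNIV. mu$i$j * V$j) - (\<Sum>k\<in>UNIV. mu$i$k) * V$i"
proof -
  have e: "\<And>j. (diag_mat r + M_mat mu)$i$j * V$j
     = (if i = j then (r$i - (\<Sum>k\<in>UNIV. mu$i$k)) * V$i else 0) + mu$i$j * V$j"
    by (auto simp: diag_mat_def M_mat_def algebra_simps)
  show ?thesis
    unfolding matrix_vector_mult_def
    apply (simp only: vec_lambda_beta)
    apply (subst sum.cong[OF refl e])
    apply (simp only: sum.distrib)
    apply (simp only: sum.delta sum.delta' finite UNIV_I if_True)
    by (simp add: algebra_simps)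
qed

lemma rhs_comp:
  "(Xi_s Psi i1 s V *v V)$i = Psi_s Psi i1 s i V * V$i"
proof -
  have e: "\<And>j. (Xi_s Psi i1 s V)$i$j * V$j = (if i = j then Psi_s Psi i1 s i V * V$i else 0)"
    by (auto simp: Xi_s_def diag_mat_def)
  show ?thesis unfolding matrix_vector_mult_def by (simp add: e)
qed

lemma comp_eq:
  fixes r :: "real^'n" and mu :: "real^'n^'n"
  assumes "(diag_mat r + M_mat mu) *v V = Xi_s Psi i1 s V *v V"
  shows "Psi_s Psi i1 s i V * V$i
     = r$i * V$i + (\<Sum>j\<in>UNIV. mu$i$j * V$j) - (\<Sum>k\<in>UNIV. mu$i$k) * V$i"
  using arg_cong[OF assms, of "\<lambda>x. x$i"] by (simp add: lhs_comp rhs_comp)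

theorem lemma6p1:
  fixes r :: "real^'n" and mu :: "real^'n^'n"
    and Psi :: "'n \<Rightarrow> real^'n \<Rightarrow> real" and i1 :: 'n
  assumes r_pos: "\<forall>i. r$i > 0"
    and mu_nonneg: "\<forall>i j. mu$i$j \<ge> 0"
    and mu_sym: "\<forall>i j. mu$i$j = mu$j$i"
    and mu_irred: "irreducible_mat mu"
    and Psi_lip: "\<forall>i. locally_lipschitz (Psi i)"
    and Psi_zero: "\<forall>i. Psi i 0 = 0"
    and Psi_mono: "\<forall>i u v. (\<forall>j. u$j \<le> v$j) \<longrightarrow> Psi i u \<le> Psi i v"
    and Psi_growth: "\<forall>i. \<exists>Ri ki ci. Ri > 0 \<and> ki > 0 \<and> ci > 0 \<and>
        (\<forall>v. (\<forall>j. v$j \<ge> 0) \<and> (\<Sum>j\<in>UNIV. \<bar>v$j\<bar>) \<ge> Ri \<longrightarrow>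
             ci * (\<Sum>j\<in>UNIV. v$j) powr ki \<le> Psi i v)"
    and mu_row: "\<forall>i. (\<Sum>j\<in>UNIV. mu$i$j) \<le> r$i / 2"
  shows "(\<forall>s\<in>{0..1}. \<forall>V. (\<forall>i. V$i \<ge> 0) \<and>
            (diag_mat r + M_mat mu) *v V = Xi_s Psi i1 s V *v V
          \<longrightarrow> V = 0 \<or> (\<forall>i. V$i > 0))
       \<and> (\<exists>c1 C1. c1 > 0 \<and> C1 > 0 \<and>
           (\<forall>s\<in>{0..1}. \<forall>V. (\<forall>i. V$i \<ge> 0) \<and>
              (diag_mat r + M_mat mu) *v V = Xi_s Psi i1 s V *v V \<and> (\<forall>i. V$i > 0)
            \<longrightarrow> c1 \<le> (\<Sum>i\<in>UNIV. V$i) \<and> (\<Sum>i\<in>UNIV. V$i) \<le> C1))"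
proof (intro conjI)
  show "\<forall>s\<in>{0..1}. \<forall>V. (\<forall>i. V$i \<ge> 0) \<and>
            (diag_mat r + M_mat mu) *v V = Xi_s Psi i1 s V *v V
          \<longrightarrow> V = 0 \<or> (\<forall>i. V$i > 0)"
  proof (intro ballI allI impI)
    fix s V assume "s \<in> {0..1::real}" and h: "(\<forall>i. V$i \<ge> 0) \<and>
            (diag_mat r + M_mat mu) *v V = Xi_s Psi i1 s V *v V"
    define I where "I = {i. V$i = 0}"
    have Vnn: "\<And>i. V$i \<ge> 0" using h by blast
    have key: "V$j = 0" if "V$i = 0" "mu$i$j \<noteq> 0" for i j
    proof -
      have ce: "Psi_s Psi i1 s i V * V$i
          = r$i * V$i + (\<Sum>j\<in>UNIV. mu$i$j * V$j) - (\<Sum>k\<in>UNIV. mu$i$k) * V$i"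
        using comp_eq[OF conjunct2[OF h]] .
      have z: "(\<Sum>j\<in>UNIV. mu$i$j * V$j) = 0"
        using ce that(1) by simp
      have nn: "\<And>k. k \<in> UNIV \<Longrightarrow> 0 \<le> mu$i$k * V$k" using Vnn mu_nonneg by simp
      have "\<forall>k\<in>UNIV. mu$i$k * V$k = 0"
      proof -
        have "(\<Sum>k\<in>UNIV. mu$i$k * V$k) = 0 \<longleftrightarrow> (\<forall>k\<in>UNIV. mu$i$k * V$k = 0)"
          by (rule sum_nonneg_eq_0_iff) (simp_all add: nn)
        then show ?thesis using z by (rule iffD1)
      qed
      then have "mu$i$j * V$j = 0" by blast
      then show ?thesis using that(2) by simp
    qed
    have "I = {} \<or> I = UNIV"
    proof (rule ccontr)
      assume a: "\<not> (I = {} \<or> I = UNIV)"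
      have "\<exists>i\<in>I. \<exists>j. j \<notin> I \<and> mu$i$j \<noteq> 0"
      proof -
        have "I \<noteq> {} \<and> I \<noteq> UNIV \<longrightarrow> (\<exists>i\<in>I. \<exists>j. j \<notin> I \<and> mu$i$j \<noteq> 0)"
          using mu_irred unfolding irreducible_mat_def by (rule spec)
        moreover have "I \<noteq> {} \<and> I \<noteq> UNIV" using a by (simp only: de_Morgan_disj simp_thms)
        ultimately show ?thesis by (rule mp)
      qed
      then obtain i j where "i \<in> I" "j \<notin> I" "mu$i$j \<noteq> 0" by blast
      then have "V$i = 0" "V$j \<noteq> 0" "mu$i$j \<noteq> 0" unfolding I_def by auto
      then show False using key by blast
    qed
    then show "V = 0 \<or> (\<forall>i. V$i > 0)"
    proof
      assume "I = {}"
      then have "\<And>i. V$i \<noteq> 0" unfolding I_def by simp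
      then have "\<forall>i. V$i > 0" using Vnn by (simp add: order_le_less)
      then show ?thesis by simp
    next
      assume "I = UNIV"
      then have "\<And>i. V$i = 0" unfolding I_def by (metis UNIV_I mem_Collect_eq)
      then have "V = 0" by (simp add: vec_eq_iff)
      then show ?thesis by simp
    qed
  qed
next
  obtain e L where eL: "e > 0" "L-lipschitz_on (ball 0 e) (Psi i1)"
    using Psi_lip unfolding locally_lipschitz_def by blast
  have L0: "L \<ge> 0" using eL(2) by (simp add: lipschitz_on_def)
  define c1 where "c1 = min e (r$i1 / (2 * (L + 1)))"
  have c1pos: "c1 > 0" using eL(1) r_pos L0 unfolding c1_def by simp
  obtain Rf kf cf where G: "\<And>i. Rf i > 0 \<and> kf i > 0 \<and> cf i > 0 \<and>
        (\<forall>v. (\<forall>j. v$j \<ge> 0) \<and> (\<Sum>j\<in>UNIV. \<bar>v$j\<bar>) \<ge> Rf i \<longrightarrow>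
             cf i * (\<Sum>j\<in>UNIV. v$j) powr kf i \<le> Psi i v)"
    using Psi_growth by metis
  define rmax where "rmax = (\<Sum>i\<in>UNIV. r$i)"
  define C1 where "C1 = (\<Sum>i\<in>UNIV. Rf i + (rmax / cf i) powr (1 / kf i)) + 1"
  have rmax_ge: "r$i \<le> rmax" for i
    unfolding rmax_def using r_pos
    by (intro member_le_sum) (auto simp: less_imp_le)
  have rmax_pos: "rmax > 0" using rmax_ge[of i1] r_pos[rule_format, of i1] by linarith
  have C1_ge: "Rf i + (rmax / cf i) powr (1 / kf i) < C1" for i
  proof -
    have "Rf i + (rmax / cf i) powr (1 / kf i) \<le> (\<Sum>i\<in>UNIV. Rf i + (rmax / cf i) powr (1 / kf i))"
    proof (intro member_le_sum)
      fix x show "0 \<le> Rf x + (rmax / cf x) powr (1 / kf x)"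
        using G[of x] by (intro add_nonneg_nonneg) auto
    qed auto
    then show ?thesis unfolding C1_def by simp
  qed
  have C1pos: "C1 > 0" using C1_ge[of i1] G[of i1] by (smt (verit) powr_ge_zero)
  show "\<exists>c1 C1. c1 > 0 \<and> C1 > 0 \<and>
           (\<forall>s\<in>{0..1}. \<forall>V. (\<forall>i. V$i \<ge> 0) \<and>
              (diag_mat r + M_mat mu) *v V = Xi_s Psi i1 s V *v V \<and> (\<forall>i. V$i > 0)
            \<longrightarrow> c1 \<le> (\<Sum>i\<in>UNIV. V$i) \<and> (\<Sum>i\<in>UNIV. V$i) \<le> C1)"
  proof (intro exI conjI ballI allI impI)
    show "c1 > 0" by (rule c1pos)
    show "C1 > 0" by (rule C1pos)
    fix s :: real and V assume s: "s \<in> {0..1}" and h: "(\<forall>i. V$i \<ge> 0) \<and>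
              (diag_mat r + M_mat mu) *v V = Xi_s Psi i1 s V *v V \<and> (\<forall>i. V$i > 0)"
    have eq: "\<And>i. Psi_s Psi i1 s i V * V$i
     = r$i * V$i + (\<Sum>j\<in>UNIV. mu$i$j * V$j) - (\<Sum>k\<in>UNIV. mu$i$k) * V$i"
      using comp_eq h by blast
    have Vpos: "\<And>i. V$i > 0" using h by blast
    have Vnn: "\<And>i. V$i \<ge> 0" using h by blast
    have absV: "(\<Sum>j\<in>UNIV. \<bar>V$j\<bar>) = (\<Sum>j\<in>UNIV. V$j)" using Vnn by simp
    have "Psi i1 V * V$i1 \<ge> r$i1 / 2 * V$i1"
    proof -
      have a: "Psi i1 V * V$i1 = r$i1 * V$i1 + (\<Sum>j\<in>UNIV. mu$i1$j * V$j) - (\<Sum>k\<in>UNIV. mu$i1$k) * V$i1"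
        using eq[of i1] by (simp add: Psi_s_def algebra_simps)
      have b: "(\<Sum>j\<in>UNIV. mu$i1$j * V$j) \<ge> 0" using mu_nonneg Vnn by (simp add: sum_nonneg)
      have c: "(\<Sum>k\<in>UNIV. mu$i1$k) * V$i1 \<le> r$i1 / 2 * V$i1"
        using mult_right_mono[OF mu_row[rule_format, of i1] Vnn[of i1]] by simp
      show ?thesis using a b c by linarith
    qed
    then have PsiV: "Psi i1 V \<ge> r$i1 / 2" using Vpos[of i1] by simp
    have nV: "c1 \<le> norm V"
    proof (rule ccontr)
      assume "\<not> c1 \<le> norm V"
      then have nl: "norm V < c1" by simp
      then have "V \<in> ball 0 e" unfolding c1_def by simp
      then have "dist (Psi i1 V) (Psi i1 0) \<le> L * dist V 0"
      proof -
        have "0 \<in> ball (0::real^'n) e" using eL(1) by simp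
        then show ?thesis using eL(2) \<open>V \<in> ball 0 e\<close> unfolding lipschitz_on_def by blast
      qed
      then have "Psi i1 V \<le> L * norm V" using Psi_zero by (simp add: dist_norm)
      also have "\<dots> \<le> L * (r$i1 / (2 * (L + 1)))"
        using nl L0 unfolding c1_def by (intro mult_left_mono) auto
      also have "\<dots> < r$i1 / 2"
        using L0 r_pos by (simp add: field_simps)
      finally show False using PsiV by simp
    qed
    have "norm V \<le> (\<Sum>i\<in>UNIV. V$i)" using norm_le_l1_cart[of V] absV by simp
    then show "c1 \<le> (\<Sum>i\<in>UNIV. V$i)" using nV by simp
    show "(\<Sum>i\<in>UNIV. V$i) \<le> C1"
    proof (rule ccontr)
      define S where "S = (\<Sum>i\<in>UNIV. V$i)"
      assume "\<not> (\<Sum>i\<in>UNIV. V$i) \<le> C1"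
      then have SC: "S > C1" unfolding S_def by simp
      have big: "Psi i V > rmax" for i
      proof -
        have "(rmax / cf i) powr (1 / kf i) \<ge> 0" by simp
        then have SR: "S \<ge> Rf i" using C1_ge[of i] SC by linarith
        have Sgt: "S > (rmax / cf i) powr (1 / kf i)" using C1_ge[of i] SC G[of i] by linarith
        have gi: "cf i * S powr kf i \<le> Psi i V"
          using G[of i] SR Vnn absV unfolding S_def by auto
        have "((rmax / cf i) powr (1 / kf i)) powr kf i < S powr kf i"
          using Sgt G[of i] by (intro powr_less_mono2) auto
        moreover have "((rmax / cf i) powr (1 / kf i)) powr kf i = rmax / cf i"
          using G[of i] rmax_pos by (simp add: powr_powr)
        ultimately have "rmax / cf i < S powr kf i" by simp
        then have "rmax < cf i * S powr kf i" using G[of i] by (simp add: field_simps)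
        then show ?thesis using gi by simp
      qed
      have bigs: "Psi_s Psi i1 s i V > rmax" for i
      proof -
        have "s * Psi i V + (1 - s) * Psi i1 V > s * rmax + (1 - s) * rmax"
        proof (cases "s = 0")
          case True then show ?thesis using big by simp
        next
          case False then have "s > 0" using s by simp
          then have "s * Psi i V > s * rmax" using big by simp
          moreover have "(1 - s) * Psi i1 V \<ge> (1 - s) * rmax"
            using s big[of i1] by (intro mult_left_mono) auto
          ultimately show ?thesis by linarith
        qed
        then show ?thesis unfolding Psi_s_def by (simp add: algebra_simps)
      qed
      have sumeq: "(\<Sum>i\<in>UNIV. Psi_s Psi i1 s i V * V$i) = (\<Sum>i\<in>UNIV. r$i * V$i)"
      proof -
        have "(\<Sum>i\<in>UNIV. Psi_s Psi i1 s i V * V$i)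
          = (\<Sum>i\<in>UNIV. r$i * V$i) + (\<Sum>i\<in>UNIV. \<Sum>j\<in>UNIV. mu$i$j * V$j)
            - (\<Sum>i\<in>UNIV. (\<Sum>k\<in>UNIV. mu$i$k) * V$i)"
          by (simp add: eq sum.distrib sum_subtractf)
        moreover have "(\<Sum>i\<in>UNIV. \<Sum>j\<in>UNIV. mu$i$j * V$j) = (\<Sum>i\<in>UNIV. (\<Sum>k\<in>UNIV. mu$i$k) * V$i)"
        proof -
          have "(\<Sum>i\<in>UNIV. \<Sum>j\<in>UNIV. mu$i$j * V$j) = (\<Sum>j\<in>UNIV. \<Sum>i\<in>UNIV. mu$i$j * V$j)"
            by (rule sum.swap)
          also have "\<dots> = (\<Sum>j\<in>UNIV. (\<Sum>i\<in>UNIV. mu$j$i) * V$j)"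
            using mu_sym by (simp add: sum_distrib_right)
          finally show ?thesis .
        qed
        ultimately show ?thesis by simp
      qed
      have "(\<Sum>i\<in>UNIV. r$i * V$i) \<le> (\<Sum>i\<in>UNIV. rmax * V$i)"
        using rmax_ge Vnn by (intro sum_mono mult_right_mono) auto
      also have "\<dots> < (\<Sum>i\<in>UNIV. Psi_s Psi i1 s i V * V$i)"
        using bigs Vpos by (intro sum_strict_mono) auto
      finally show False using sumeq by simp
    qed
  qed
qed

end
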